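(* Let $G$ be a Parametric Timed Game, $R\subseteq L$ a reachability objective, and $W(R)$ the set of winning states of $G$ for $R$. Then $$\mathit{SafePred}\big(W(R)\cup\mathit{WinningMoves}(W(R)),\ \mathit{Uncontrollable}(W(R))\big)\subseteq W(R).$$
   Context: A Parametric Timed Game (PTG) is a tuple $G=(L,X,P,\mathit{Act},T_c,T_u,\ell_0,\mathit{Inv})$ where $L$ is a finite set of locations, $X$ a finite set of clocks, $P$ a finite set of parameters, $\mathit{Act}$ a set of labels, $\ell_0\in L$ the initial location, $T=T_c\cup T_u$ (disjoint union of controllable and uncontrollable transitions) is a finite set of tuples $(\ell,g,a,Y,\ell')$ with $\ell,\ell'\in L$, $a\in\mathit{Act}$, $Y\subseteq X$ and $g$ a guard, and $\mathit{Inv}$ maps each location to a guard. A linear term over $P$ is an expression $k_0+\sum_i k_i p_i$ with $k_i\in\mathbb{Q}$, $p_i\in P$. A guard is a finite conjunction of constraints $x\sim \mathit{plt}$ and $\mathit{plt}'\sim\mathit{plt}$ with $x\in X$, $\sim\in\{<,\le,=,\ge,>\}$, and $\mathit{plt},\mathit{plt}'$ linear terms over $P$. A valuation is a pair $v=(v_X,v_P)$ with $v_X:X\to\mathbb{R}_{\ge0}$ and $v_P:P\to\mathbb{Q}_{\ge0}$; satisfaction $v\models g$ is defined by substituting values. For $\delta\ge0$, $v+\delta=(v_X+\delta,v_P)$ (all clocks increased by $\delta$), and $v[Y:=0]$ sets clocks in $Y$ to $0$ and leaves other clocks and the parameters unchanged. A state is a pair $(\ell,v)$ with $v\models\mathit{Inv}(\ell)$;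 $\mathbb{S}$ is the set of states. Timed transition: for $\delta\in\mathbb{R}_{\ge0}$, $(\ell,v)\to^{\delta}(\ell',v')$ iff both are states, $\ell=\ell'$ and $v'=v+\delta$. Discrete transition: for $t=(\ell,g,a,Y,\ell')\in T$, $(\ell,v)\to^{t}(\ell',v')$ iff both are states, $v\models g$ and $v'=v[Y:=0]$. A run from a state $s_0$ is a finite or infinite sequence $s_0s_1s_2\ldots$ of states with $s_{2i}\to^{\delta_i}s_{2i+1}\to^{t_i}s_{2i+2}$ for some $\delta_i\ge0$, $t_i\in T$ (as long as the sequence continues); a history is a finite prefix of a run, $\mathcal{H}$ the set of histories, and $ls(h)$ the last state of $h$. Coverage: $\mathit{Cover}(s\to^{\delta}s')=\{s''\in\mathbb{S}\mid \exists\,0\le\delta'\le\delta,\ s\to^{\delta'}s''\}$; $\mathit{Cover}(s)=\{s'\mid\exists\delta\ge0,\ s\to^\delta s'\}$; the coverage of a run $r=s_0s_1\ldots$ is the union of $\mathit{Cover}(s_{2i}\to^{\delta}s_{2i+1})$ over its timed transitions, together with $\mathit{Cover}(ls(r))$ if $r$ is finite. For $R\subseteq L$, a run $r$ is winning iff $\mathit{Cover}(r)$ contains a state whose location is in $R$. A controller strategy is a function $\sigma_c:\mathcal{H}\to\mathbb{R}_{\ge0}\cup\{\infty\}\cup T_c$ and an environment strategy a function $\sigma_e:\mathcal{H}\to\mathbb{R}_{\ge0}\cup\{\infty\}\cup T_u$, such that for $\sigma\in\{\sigma_c,\sigma_e\}$ and every $h$: (1) if $\sigma(h)=(\ell,g,a,Y,\ell')\in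 T$ then $ls(h)=(\ell,v)$ with $v\models g$ and $v[Y:=0]\models\mathit{Inv}(\ell')$; (2) if $\sigma(h)=\delta\in\mathbb{R}_{\ge0}$ and $ls(h)\to^{\delta}s$ for some state $s$, then $\sigma(h\to^\delta s)\in T$ (where $h\to^{\delta}s$ is $h$ extended by the delay). The global strategy $\sigma=\sigma_{(\sigma_c,\sigma_e)}$ is: if $\sigma_e(h)=t_u\in T_u$ then $\sigma(h)=t_u$; if $\sigma_c(h)=t_c\in T_c$ and $\sigma_e(h)$ is a delay then $\sigma(h)=t_c$; if both are delays $\delta,\delta'$ then $\sigma(h)=\min(\delta,\delta')$. The run induced by $\sigma$ from $s_0$ is built as follows: at even index $i$, if $\sigma(s_0\ldots s_i)=t\in T$ then $s_{i+1}=s_i$ (delay $0$) and $s_{i+2}$ is the $t$-successor; if it is a delay $\delta$ and a state $s$ with $s_i\to^\delta s$ exists, $s_{i+1}=s$; otherwise the run ends; at odd index $i$, $\sigma(s_0\ldots s_i)$ is a transition $t$ and $s_{i+1}$ is the unique state with $s_i\to^t s_{i+1}$. A run adheres to $\sigma_c$ if it is the run induced by $\sigma_{(\sigma_c,\sigma_e)}$ for some environment strategy $\sigma_e$. A controller strategy is winning from $s$ (for $R$) if all runs from $s$ adhering to it are winning; $s$ is a winning state if such a strategy exists, and $W(R)$ denotes the set of winning states. Operators on sets of states $S,S_1,S_2\subseteq\mathbb{S}$: $\mathit{WinningMoves}(S)=\{s\in\mathbb{S}\mid\exists t\in T_c,\ s'\in S,\ s\to^t s'\}$; $\mathit{Uncontrollable}(S)=\{s\in\mathbb{S}\mid\exists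 t\in T_u,\ s'\notin S,\ s\to^t s'\}$; $\mathit{SafePred}(S_1,S_2)=\{s\in\mathbb{S}\mid \exists s'\in S_1,\ \exists\delta\ge0,\ s\to^\delta s'\ \wedge\ \mathit{Cover}(s\to^\delta s')\cap S_2=\emptyset\}$. *)

theory Defs
  imports "HOL-Library.Extended_Nat" Complex_Main
begin

datatype cmp = Lt | Le | Eq | Ge | Gt

fun cmp_sem :: "cmp \<Rightarrow> real \<Rightarrow> real \<Rightarrow> bool" where
  "cmp_sem Lt a b = (a < b)"
| "cmp_sem Le a b = (a \<le> b)"
| "cmp_sem Eq a b = (a = b)"
| "cmp_sem Ge a b = (a \<ge> b)"
| "cmp_sem Gt a b = (a > b)"

text \<open>A linear term k0 + sum_i k_i p_i over the parameters.\<close>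
type_synonym 'p lterm = "rat \<times> ('p \<Rightarrow> rat)"

datatype ('x, 'p) atom =
    ClockC 'x cmp "'p lterm"
  | ParamC "'p lterm" cmp "'p lterm"

type_synonym ('x, 'p) guard = "('x, 'p) atom list"

type_synonym ('x, 'p) val = "('x \<Rightarrow> real) \<times> ('p \<Rightarrow> rat)"

definition is_val :: "('x, 'p) val \<Rightarrow> bool" where
  "is_val v \<longleftrightarrow> (\<forall>x. fst v x \<ge> 0) \<and> (\<forall>p. snd v p \<ge> 0)"

definition lt_eval :: "('p::finite) lterm \<Rightarrow> ('p \<Rightarrow> rat) \<Rightarrow> real" where
  "lt_eval e vp = real_of_rat (fst e + (\<Sum>p\<in>UNIV. snd e p * vp p))"

fun atom_sat :: "('x, 'p::finite) val \<Rightarrow> ('x, 'p) atom \<Rightarrow> bool" where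
  "atom_sat v (ClockC x c e) = cmp_sem c (fst v x) (lt_eval e (snd v))"
| "atom_sat v (ParamC e1 c e2) = cmp_sem c (lt_eval e1 (snd v)) (lt_eval e2 (snd v))"

definition gsat :: "('x, 'p::finite) val \<Rightarrow> ('x, 'p) guard \<Rightarrow> bool" where
  "gsat v g \<longleftrightarrow> (\<forall>a\<in>set g. atom_sat v a)"

type_synonym ('l, 'x, 'p, 'a) trans = "'l \<times> ('x, 'p) guard \<times> 'a \<times> 'x set \<times> 'l"

record ('l, 'x, 'p, 'a) ptg =
  Tc :: "('l, 'x, 'p, 'a) trans set"
  Tu :: "('l, 'x, 'p, 'a) trans set"
  init :: 'l
  Inv :: "'l \<Rightarrow> ('x, 'p) guard"

definition Tr :: "('l, 'x, 'p, 'a, 'z) ptg_scheme \<Rightarrow> ('l, 'x, 'p, 'a) trans set" where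
  "Tr G = Tc G \<union> Tu G"

definition ptg_wf :: "('l, 'x, 'p, 'a, 'z) ptg_scheme \<Rightarrow> bool" where
  "ptg_wf G \<longleftrightarrow> finite (Tc G) \<and> finite (Tu G) \<and> Tc G \<inter> Tu G = {}"

definition vdelay :: "('x, 'p) val \<Rightarrow> real \<Rightarrow> ('x, 'p) val" where
  "vdelay v d = ((\<lambda>x. fst v x + d), snd v)"

definition vreset :: "('x, 'p) val \<Rightarrow> 'x set \<Rightarrow> ('x, 'p) val" where
  "vreset v Y = ((\<lambda>x. if x \<in> Y then 0 else fst v x), snd v)"

type_synonym ('l, 'x, 'p) state = "'l \<times> ('x, 'p) val"

definition states :: "('l, 'x, 'p::finite, 'a, 'z) ptg_scheme \<Rightarrow> ('l, 'x, 'p) state set" where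
  "states G = {(l, v). is_val v \<and> gsat v (Inv G l)}"

definition timed_step ::
  "('l, 'x, 'p::finite, 'a, 'z) ptg_scheme \<Rightarrow> ('l, 'x, 'p) state \<Rightarrow> real \<Rightarrow> ('l, 'x, 'p) state \<Rightarrow> bool" where
  "timed_step G s d s' \<longleftrightarrow> s \<in> states G \<and> s' \<in> states G \<and> d \<ge> 0 \<and>
     fst s = fst s' \<and> snd s' = vdelay (snd s) d"

definition disc_step ::
  "('l, 'x, 'p::finite, 'a, 'z) ptg_scheme \<Rightarrow> ('l, 'x, 'p) state \<Rightarrow> ('l, 'x, 'p, 'a) trans \<Rightarrow> ('l, 'x, 'p) state \<Rightarrow> bool" where
  "disc_step G s t s' \<longleftrightarrow> t \<in> Tr G \<and> s \<in> states G \<and> s' \<in> states G \<and>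
     (case t of (l, g, a, Y, l') \<Rightarrow>
        fst s = l \<and> fst s' = l' \<and> gsat (snd s) g \<and> snd s' = vreset (snd s) Y)"

definition cover_step ::
  "('l, 'x, 'p::finite, 'a, 'z) ptg_scheme \<Rightarrow> ('l, 'x, 'p) state \<Rightarrow> real \<Rightarrow> ('l, 'x, 'p) state set" where
  "cover_step G s d = {s''. \<exists>d'. 0 \<le> d' \<and> d' \<le> d \<and> timed_step G s d' s''}"

definition cover_state ::
  "('l, 'x, 'p::finite, 'a, 'z) ptg_scheme \<Rightarrow> ('l, 'x, 'p) state \<Rightarrow> ('l, 'x, 'p) state set" where
  "cover_state G s = {s'. \<exists>d. timed_step G s d s'}"

definition histories :: "('l, 'x, 'p::finite, 'a, 'z) ptg_scheme \<Rightarrow> ('l, 'x, 'p) state list set" where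
  "histories G = {h. h \<noteq> [] \<and> h ! 0 \<in> states G \<and>
     (\<forall>i. Suc i < length h \<longrightarrow>
        (even i \<longrightarrow> (\<exists>d. timed_step G (h ! i) d (h ! Suc i))) \<and>
        (odd i \<longrightarrow> (\<exists>t. disc_step G (h ! i) t (h ! Suc i))))}"

datatype 't move = Wait real | Forever | Take 't

type_synonym ('l, 'x, 'p, 'a) strategy = "('l, 'x, 'p) state list \<Rightarrow> ('l, 'x, 'p, 'a) trans move"

definition valid_strategy ::
  "('l, 'x, 'p::finite, 'a, 'z) ptg_scheme \<Rightarrow> ('l, 'x, 'p, 'a) trans set \<Rightarrow> ('l, 'x, 'p, 'a) strategy \<Rightarrow> bool" where
  "valid_strategy G TT \<sigma> \<longleftrightarrow> (\<forall>h\<in>histories G.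
     (\<forall>d. \<sigma> h = Wait d \<longrightarrow> d \<ge> 0) \<and>
     (\<forall>t. \<sigma> h = Take t \<longrightarrow> t \<in> TT \<and>
        (case t of (l, g, a, Y, l') \<Rightarrow>
           fst (last h) = l \<and> gsat (snd (last h)) g \<and> gsat (vreset (snd (last h)) Y) (Inv G l'))) \<and>
     (\<forall>d s. \<sigma> h = Wait d \<longrightarrow> timed_step G (last h) d s \<longrightarrow> h @ [s] \<in> histories G \<longrightarrow>
        (\<exists>t. \<sigma> (h @ [s]) = Take t)))"

definition ctrl_strategy :: "('l, 'x, 'p::finite, 'a, 'z) ptg_scheme \<Rightarrow> ('l, 'x, 'p, 'a) strategy \<Rightarrow> bool" where
  "ctrl_strategy G \<sigma> \<longleftrightarrow> valid_strategy G (Tc G) \<sigma>"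

definition env_strategy :: "('l, 'x, 'p::finite, 'a, 'z) ptg_scheme \<Rightarrow> ('l, 'x, 'p, 'a) strategy \<Rightarrow> bool" where
  "env_strategy G \<sigma> \<longleftrightarrow> valid_strategy G (Tu G) \<sigma>"

fun min_move :: "'t move \<Rightarrow> 't move \<Rightarrow> 't move" where
  "min_move (Wait d) (Wait d') = Wait (min d d')"
| "min_move Forever m = m"
| "min_move m Forever = m"
| "min_move m m' = m"

definition global_strategy ::
  "('l, 'x, 'p, 'a) strategy \<Rightarrow> ('l, 'x, 'p, 'a) strategy \<Rightarrow> ('l, 'x, 'p, 'a) strategy" where
  "global_strategy \<sigma>c \<sigma>e h =
     (case \<sigma>e h of
        Take tu \<Rightarrow> Take tu
      | _ \<Rightarrow> (case \<sigma>c h of Take tc \<Rightarrow> Take tc | _ \<Rightarrow> min_move (\<sigma>c h) (\<sigma>e h)))"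

definition pref :: "(nat \<Rightarrow> 's) \<Rightarrow> nat \<Rightarrow> 's list" where
  "pref r i = map r [0..<Suc i]"

text \<open>A run is given by a state sequence r and its length n (number of states,
  possibly infinite); only r i for i < n is relevant.
  induced_run G sigma s0 r n: (r, n) is the run induced by sigma from s0.\<close>
definition induced_run ::
  "('l, 'x, 'p::finite, 'a, 'z) ptg_scheme \<Rightarrow> ('l, 'x, 'p, 'a) strategy \<Rightarrow> ('l, 'x, 'p) state
    \<Rightarrow> (nat \<Rightarrow> ('l, 'x, 'p) state) \<Rightarrow> enat \<Rightarrow> bool" where
  "induced_run G \<sigma> s0 r n \<longleftrightarrow> 0 < n \<and> r 0 = s0 \<and>
     (\<forall>i. enat i < n \<longrightarrow>
       (even i \<longrightarrow>
          (case \<sigma> (pref r i) of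
             Take t \<Rightarrow> enat (Suc (Suc i)) < n \<and> r (Suc i) = r i \<and> disc_step G (r (Suc i)) t (r (Suc (Suc i)))
           | Wait d \<Rightarrow> (if \<exists>s. timed_step G (r i) d s
                        then enat (Suc i) < n \<and> timed_step G (r i) d (r (Suc i))
                        else n = enat (Suc i))
           | Forever \<Rightarrow> n = enat (Suc i))) \<and>
       (odd i \<longrightarrow> (\<forall>t. \<sigma> (pref r (i - 1)) \<noteq> Take t) \<longrightarrow>
          (case \<sigma> (pref r i) of
             Take t \<Rightarrow> enat (Suc i) < n \<and> disc_step G (r i) t (r (Suc i))
           | _ \<Rightarrow> n = enat (Suc i))))"

definition run_cover ::
  "('l, 'x, 'p::finite, 'a, 'z) ptg_scheme \<Rightarrow> (nat \<Rightarrow> ('l, 'x, 'p) state) \<Rightarrow> enat \<Rightarrow> ('l, 'x, 'p) state set" where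
  "run_cover G r n =
     (\<Union>i\<in>{i. even i \<and> enat (Suc i) < n}.
        \<Union>d\<in>{d. timed_step G (r i) d (r (Suc i))}. cover_step G (r i) d)
     \<union> (\<Union>k\<in>{k. n = enat (Suc k)}. cover_state G (r k))"

definition winning_run ::
  "('l, 'x, 'p::finite, 'a, 'z) ptg_scheme \<Rightarrow> 'l set \<Rightarrow> (nat \<Rightarrow> ('l, 'x, 'p) state) \<Rightarrow> enat \<Rightarrow> bool" where
  "winning_run G R r n \<longleftrightarrow> (\<exists>s\<in>run_cover G r n. fst s \<in> R)"

definition winning_strategy ::
  "('l, 'x, 'p::finite, 'a, 'z) ptg_scheme \<Rightarrow> 'l set \<Rightarrow> ('l, 'x, 'p, 'a) strategy \<Rightarrow> ('l, 'x, 'p) state \<Rightarrow> bool" where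
  "winning_strategy G R \<sigma>c s \<longleftrightarrow> ctrl_strategy G \<sigma>c \<and>
     (\<forall>\<sigma>e r n. env_strategy G \<sigma>e \<longrightarrow> induced_run G (global_strategy \<sigma>c \<sigma>e) s r n \<longrightarrow>
        winning_run G R r n)"

definition W :: "('l, 'x, 'p::finite, 'a, 'z) ptg_scheme \<Rightarrow> 'l set \<Rightarrow> ('l, 'x, 'p) state set" where
  "W G R = {s \<in> states G. \<exists>\<sigma>c. winning_strategy G R \<sigma>c s}"

definition WinningMoves ::
  "('l, 'x, 'p::finite, 'a, 'z) ptg_scheme \<Rightarrow> ('l, 'x, 'p) state set \<Rightarrow> ('l, 'x, 'p) state set" where
  "WinningMoves G S = {s \<in> states G. \<exists>t\<in>Tc G. \<exists>s'\<in>S. disc_step G s t s'}"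

definition Uncontrollable ::
  "('l, 'x, 'p::finite, 'a, 'z) ptg_scheme \<Rightarrow> ('l, 'x, 'p) state set \<Rightarrow> ('l, 'x, 'p) state set" where
  "Uncontrollable G S = {s \<in> states G. \<exists>t\<in>Tu G. \<exists>s'. s' \<notin> S \<and> disc_step G s t s'}"

definition SafePred ::
  "('l, 'x, 'p::finite, 'a, 'z) ptg_scheme \<Rightarrow> ('l, 'x, 'p) state set \<Rightarrow> ('l, 'x, 'p) state set \<Rightarrow> ('l, 'x, 'p) state set" where
  "SafePred G S1 S2 = {s \<in> states G. \<exists>s'\<in>S1. \<exists>d\<ge>0. timed_step G s d s' \<and> cover_step G s d \<inter> S2 = {}}"

end

theory Submission
  imports Defs
begin

lemma pref_Suc: "pref r (Suc i) = pref r i @ [r (Suc i)]" by (simp add: pref_def)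
lemma pref_0[simp]: "pref r 0 = [r 0]" by (simp add: pref_def)
lemma pref_1: "pref r (Suc 0) = [r 0, r (Suc 0)]" by (simp add: pref_def)
lemma pref_ne[simp]: "pref r i \<noteq> []" by (simp add: pref_def)
lemma pref_hd[simp]: "hd (pref r i) = r 0" by (simp add: pref_def hd_map del: upt_Suc)
lemma pref_last[simp]: "last (pref r i) = r i" by (simp add: pref_def last_map del: upt_Suc)
lemma pref_shift: "pref r (Suc (Suc i)) = [r 0, r (Suc 0)] @ pref (\<lambda>k. r (Suc (Suc k))) i"
  by (induction i) (simp_all add: pref_Suc pref_def)

definition step_ok where
 "step_ok G \<sigma> r n i \<longleftrightarrow> (even i \<longrightarrow>
          (case \<sigma> (pref r i) of
             Take t \<Rightarrow> enat (Suc (Suc i)) < n \<and> r (Suc i) = r i \<and> disc_step G (r (Suc i)) t (r (Suc (Suc i)))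
           | Wait d \<Rightarrow> (if \<exists>s. timed_step G (r i) d s
                        then enat (Suc i) < n \<and> timed_step G (r i) d (r (Suc i))
                        else n = enat (Suc i))
           | Forever \<Rightarrow> n = enat (Suc i))) \<and>
       (odd i \<longrightarrow> (\<forall>t. \<sigma> (pref r (i - 1)) \<noteq> Take t) \<longrightarrow>
          (case \<sigma> (pref r i) of
             Take t \<Rightarrow> enat (Suc i) < n \<and> disc_step G (r i) t (r (Suc i))
           | _ \<Rightarrow> n = enat (Suc i)))"

lemma induced_run_alt: "induced_run G \<sigma> s r n \<longleftrightarrow> 0 < n \<and> r 0 = s \<and> (\<forall>i. enat i < n \<longrightarrow> step_ok G \<sigma> r n i)"
  unfolding induced_run_def step_ok_def by simp

lemma enat_l2: "enat (Suc (Suc j)) < n + 2 \<longleftrightarrow> enat j < n" by (cases n) (auto simp: numeral_eq_enat)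
lemma enat_e2: "n + 2 = enat (Suc (Suc j)) \<longleftrightarrow> n = enat j" by (cases n) (auto simp: numeral_eq_enat)

lemma step_ok_shift:
  assumes app: "\<And>h. h \<noteq> [] \<Longrightarrow> hd h = r (Suc (Suc 0)) \<Longrightarrow> \<sigma> (r 0 # r (Suc 0) # h) = \<sigma>' h"
  shows "step_ok G \<sigma> r (n+2) (Suc (Suc j)) \<longleftrightarrow> step_ok G \<sigma>' (\<lambda>k. r (Suc (Suc k))) n j"
proof -
  have e: "\<sigma> (pref r (Suc (Suc i))) = \<sigma>' (pref (\<lambda>k. r (Suc (Suc k))) i)" for i
    by (simp add: pref_shift app)
  have o: "odd j \<Longrightarrow> \<sigma> (pref r (Suc j)) = \<sigma>' (pref (\<lambda>k. r (Suc (Suc k))) (j - 1))"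
    using e[of "j - 1"] by (cases j) auto
  show ?thesis
    unfolding step_ok_def
    apply (cases "odd j")
    apply (simp_all add: e o enat_l2 enat_e2 split: move.split)
    done
qed

lemma enat_lt2: "0 < n \<Longrightarrow> enat (Suc (Suc 0)) < n + 2" by (cases n) (auto simp: numeral_eq_enat zero_enat_def)
lemma enat_lt1: "enat (Suc 0) < n + 2" by (cases n) (auto simp: numeral_eq_enat)

lemma shift_run:
  assumes ir: "induced_run G \<sigma> s r (n+2)" and n0: "0 < n"
  and app: "\<And>h. h \<noteq> [] \<Longrightarrow> hd h = r (Suc (Suc 0)) \<Longrightarrow> \<sigma> (r 0 # r (Suc 0) # h) = \<sigma>' h"
  shows "induced_run G \<sigma>' (r (Suc (Suc 0))) (\<lambda>k. r (Suc (Suc k))) n"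
  unfolding induced_run_alt
proof (intro conjI allI impI n0 refl)
  fix j assume "enat j < n"
  then have "enat (Suc (Suc j)) < n + 2" by (simp add: enat_l2)
  with ir have "step_ok G \<sigma> r (n+2) (Suc (Suc j))" by (simp add: induced_run_alt)
  then show "step_ok G \<sigma>' (\<lambda>k. r (Suc (Suc k))) n j" using step_ok_shift[where r=r and \<sigma>=\<sigma> and \<sigma>'=\<sigma>', OF app] by blast
qed

lemma unshift_run:
  assumes ir: "induced_run G \<sigma>' y r' n"
  and app: "\<And>h. h \<noteq> [] \<Longrightarrow> hd h = y \<Longrightarrow> \<sigma> (s # x # h) = \<sigma>' h"
  and FS: "(\<sigma> [s] = Take t \<and> x = s \<and> disc_step G x t y) \<or>
           (\<sigma> [s] = Wait \<delta> \<and> timed_step G s \<delta> x \<and> \<sigma> [s, x] = Take t \<and> disc_step G x t y)"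
  shows "induced_run G \<sigma> s (\<lambda>k. if k = 0 then s else if k = Suc 0 then x else r' (k - 2)) (n+2)"
    (is "induced_run G \<sigma> s ?r _")
proof -
  have n0: "0 < n" and r0: "r' 0 = y" and irr: "\<And>j. enat j < n \<Longrightarrow> step_ok G \<sigma>' r' n j"
    using ir by (auto simp: induced_run_alt)
  have sh: "(\<lambda>k. ?r (Suc (Suc k))) = r'" by auto
  have app': "\<And>h. h \<noteq> [] \<Longrightarrow> hd h = ?r (Suc (Suc 0)) \<Longrightarrow> \<sigma> (?r 0 # ?r (Suc 0) # h) = \<sigma>' h"
    using app r0 by simp
  have "step_ok G \<sigma> ?r (n+2) i" if "enat i < n + 2" for i
  proof (cases i)
    case 0
    from FS show ?thesis
    proof
      assume "\<sigma> [s] = Take t \<and> x = s \<and> disc_step G x t y"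
      then show ?thesis using 0 enat_lt2[OF n0] r0 by (auto simp: step_ok_def)
    next
      assume h: "\<sigma> [s] = Wait \<delta> \<and> timed_step G s \<delta> x \<and> \<sigma> [s, x] = Take t \<and> disc_step G x t y"
      then have "\<exists>z. timed_step G s \<delta> z" by blast
      then show ?thesis using 0 h enat_lt1[of n] by (simp add: step_ok_def)
    qed
  next
    case (Suc i')
    show ?thesis
    proof (cases i')
      case 0
      then show ?thesis using Suc FS enat_lt2[OF n0] r0
        apply (auto simp: step_ok_def pref_1)
        apply (metis prod.collapse)
        done
    next
      case (Suc j)
      with \<open>i = Suc i'\<close> that have "enat j < n" by (simp add: enat_l2)
      then have "step_ok G \<sigma>' r' n j" by (rule irr)
      then show ?thesis using step_ok_shift[where r="?r" and \<sigma>=\<sigma> and \<sigma>'=\<sigma>' and G=G and n=n and j=j, OF app'] sh \<open>i = Suc i'\<close> Suc by simp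
    qed
  qed
  then show ?thesis unfolding induced_run_alt using n0 by (simp add: enat_lt1)
qed

lemma cover_step_fst: "z \<in> cover_step G s d \<Longrightarrow> fst z = fst s"
  by (auto simp: cover_step_def timed_step_def)
lemma cover_state_fst: "z \<in> cover_state G s \<Longrightarrow> fst z = fst s"
  by (auto simp: cover_state_def timed_step_def)

lemma enat_n2_ne: "n + 2 \<noteq> enat (Suc 0)" "n + 2 \<noteq> enat 0"
  by (cases n; simp add: numeral_eq_enat)+
lemma enat_n2_ne1: "0 < n \<Longrightarrow> n + 2 \<noteq> enat (Suc (Suc 0))"
  by (cases n; simp add: numeral_eq_enat zero_enat_def)

lemma cover_shift_sub:
  "run_cover G (\<lambda>k. r (Suc (Suc k))) n \<subseteq> run_cover G r (n+2)"
proof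
  fix z assume "z \<in> run_cover G (\<lambda>k. r (Suc (Suc k))) n"
  then consider (a) i d where "even i" "enat (Suc i) < n" "timed_step G (r (Suc (Suc i))) d (r (Suc (Suc (Suc i))))"
      "z \<in> cover_step G (r (Suc (Suc i))) d"
    | (b) k where "n = enat (Suc k)" "z \<in> cover_state G (r (Suc (Suc k)))"
    unfolding run_cover_def by blast
  then show "z \<in> run_cover G r (n+2)"
  proof cases
    case a
    then have "enat (Suc (Suc (Suc i))) < n + 2" by (simp add: enat_l2)
    then show ?thesis unfolding run_cover_def using a
      by (intro UnI1 UN_I[of "Suc (Suc i)"]) auto
  next
    case b
    then have "n + 2 = enat (Suc (Suc (Suc k)))" by (simp add: enat_e2)
    then show ?thesis unfolding run_cover_def using b
      by (intro UnI2 UN_I[of "Suc (Suc k)"]) auto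
  qed
qed

lemma cover_unshift:
  assumes n0: "0 < n"
  shows "run_cover G r (n+2) \<subseteq> {z. fst z = fst (r 0)} \<union> run_cover G (\<lambda>k. r (Suc (Suc k))) n"
proof
  fix z assume "z \<in> run_cover G r (n+2)"
  then consider (a) i d where "even i" "enat (Suc i) < n + 2" "timed_step G (r i) d (r (Suc i))"
      "z \<in> cover_step G (r i) d"
    | (b) k where "n + 2 = enat (Suc k)" "z \<in> cover_state G (r k)"
    unfolding run_cover_def by blast
  then show "z \<in> {z. fst z = fst (r 0)} \<union> run_cover G (\<lambda>k. r (Suc (Suc k))) n"
  proof cases
    case a
    show ?thesis
    proof (cases i)
      case 0 then show ?thesis using a cover_step_fst by blast
    next
      case (Suc i')
      with a obtain j where j: "i = Suc (Suc j)" by (cases i') auto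
      with a have "enat (Suc j) < n" "even j" by (simp_all add: enat_l2)
      then show ?thesis unfolding run_cover_def using a j
        by (intro UnI2 UnI1 UN_I[of j]) auto
    qed
  next
    case b
    then obtain j where j: "k = Suc (Suc j)" using enat_n2_ne enat_n2_ne1[OF n0]
      by (cases k; cases "k - 1"; auto)
    with b have "n = enat (Suc j)" by (simp add: enat_e2)
    then show ?thesis unfolding run_cover_def using b j
      by (intro UnI2 UnI2 UN_I[of j]) auto
  qed
qed

lemma timed_det: "timed_step G s d x \<Longrightarrow> timed_step G s d x' \<Longrightarrow> x = x'"
  by (auto simp: timed_step_def prod_eq_iff)
lemma disc_det: "disc_step G s t x \<Longrightarrow> disc_step G s t x' \<Longrightarrow> x = x'"
  by (auto simp: disc_step_def prod_eq_iff split: prod.splits)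
lemma timed_0: "s \<in> states G \<Longrightarrow> timed_step G s 0 s"
  by (auto simp: timed_step_def vdelay_def)
lemma timed_states: "timed_step G s d x \<Longrightarrow> s \<in> states G \<and> x \<in> states G \<and> 0 \<le> d \<and> fst x = fst s"
  by (auto simp: timed_step_def)
lemma disc_states: "disc_step G s t x \<Longrightarrow> s \<in> states G \<and> x \<in> states G \<and> t \<in> Tr G"
  by (auto simp: disc_step_def)
lemma timed_trans: "timed_step G s d1 x \<Longrightarrow> timed_step G x d2 z \<Longrightarrow> timed_step G s (d1+d2) z"
  by (auto simp: timed_step_def vdelay_def algebra_simps)
lemma timed_split: "timed_step G s d x \<Longrightarrow> timed_step G s e z \<Longrightarrow> d \<le> e \<Longrightarrow> timed_step G x (e - d) z"
  by (auto simp: timed_step_def vdelay_def algebra_simps)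

lemma cmp_convex: "cmp_sem c a b \<Longrightarrow> cmp_sem c (a + d) b \<Longrightarrow> 0 \<le> e \<Longrightarrow> e \<le> d \<Longrightarrow> cmp_sem c (a + e) b"
  by (cases c) auto

lemma timed_convex:
  assumes "timed_step G s d x" "0 \<le> e" "e \<le> d"
  shows "\<exists>z. timed_step G s e z"
proof -
  obtain l v where s: "s = (l, v)" by (cases s)
  have sv: "is_val v" "gsat v (Inv G l)" using assms(1) s by (auto simp: timed_step_def states_def)
  have xv: "gsat (vdelay v d) (Inv G l)" using assms(1) s
    by (cases x) (auto simp: timed_step_def states_def)
  have "gsat (vdelay v e) (Inv G l)" unfolding gsat_def
  proof
    fix a assume a: "a \<in> set (Inv G l)"
    then have h1: "atom_sat v a" "atom_sat (vdelay v d) a" using sv xv by (auto simp: gsat_def)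
    show "atom_sat (vdelay v e) a"
    proof (cases a)
      case (ClockC y c t)
      then show ?thesis using h1 cmp_convex[of c "fst v y" _ d e] assms by (auto simp: vdelay_def)
    next
      case (ParamC t1 c t2)
      then show ?thesis using h1 by (auto simp: vdelay_def)
    qed
  qed
  moreover have "is_val (vdelay v e)" using sv assms by (auto simp: is_val_def vdelay_def add_nonneg_nonneg)
  ultimately have "timed_step G s e (l, vdelay v e)" using s sv assms by (auto simp: timed_step_def states_def)
  then show ?thesis by blast
qed

lemma hist_single: "s \<in> states G \<Longrightarrow> [s] \<in> histories G"
  by (auto simp: histories_def)

lemma hist_two: "timed_step G s d x \<Longrightarrow> [s, x] \<in> histories G"
  unfolding histories_def by (auto simp: timed_states)

lemma hist_cons2:
  assumes "timed_step G a d b" "disc_step G b t c" "h \<in> histories G" "hd h = c"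
  shows "a # b # h \<in> histories G"
proof -
  have hne: "h \<noteq> []" and hh: "\<And>i. Suc i < length h \<Longrightarrow>
        (even i \<longrightarrow> (\<exists>d. timed_step G (h ! i) d (h ! Suc i))) \<and>
        (odd i \<longrightarrow> (\<exists>t. disc_step G (h ! i) t (h ! Suc i)))"
    using assms(3) by (auto simp: histories_def)
  have h0: "h ! 0 = c" using hne assms(4) by (cases h) auto
  have st: "(a # b # h) ! 0 \<in> states G" using assms(1) by (simp add: timed_states)
  have "\<forall>i. Suc i < length (a # b # h) \<longrightarrow> (even i \<longrightarrow> (\<exists>d. timed_step G ((a # b # h) ! i) d ((a # b # h) ! Suc i))) \<and>
        (odd i \<longrightarrow> (\<exists>t. disc_step G ((a # b # h) ! i) t ((a # b # h) ! Suc i)))"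
  proof (intro allI impI)
    fix i assume i: "Suc i < length (a # b # h)"
    show "(even i \<longrightarrow> (\<exists>d. timed_step G ((a # b # h) ! i) d ((a # b # h) ! Suc i))) \<and>
        (odd i \<longrightarrow> (\<exists>t. disc_step G ((a # b # h) ! i) t ((a # b # h) ! Suc i)))"
    proof (cases i)
      case 0 then show ?thesis using assms(1) by auto
    next
      case (Suc i')
      show ?thesis
      proof (cases i')
        case 0 then show ?thesis using Suc assms(2) h0 by (auto simp del: split_paired_Ex)
      next
        case (Suc j)
        then show ?thesis using hh[of j] i \<open>i = Suc i'\<close> by auto
      qed
    qed
  qed
  then show ?thesis using st unfolding histories_def by blast
qed

lemma hist_drop2:
  assumes "a # b # h \<in> histories G" "h \<noteq> []"
  shows "h \<in> histories G"
proof -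
  have hh: "\<And>i. Suc i < length (a # b # h) \<Longrightarrow>
        (even i \<longrightarrow> (\<exists>d. timed_step G ((a # b # h) ! i) d ((a # b # h) ! Suc i))) \<and>
        (odd i \<longrightarrow> (\<exists>t. disc_step G ((a # b # h) ! i) t ((a # b # h) ! Suc i)))"
    using assms(1) by (auto simp: histories_def)
  have "h ! 0 \<in> states G"
  proof (cases "length h = 1")
    case True
    from hh[of 1] True have "\<exists>t. disc_step G b t (h ! 0)" by auto
    then show ?thesis using disc_states by blast
  next
    case False
    with assms(2) have "1 < length h" by (cases h) auto
    from hh[of 2] this have "\<exists>d. timed_step G (h ! 0) d (h ! 1)" by (auto simp: numeral_2_eq_2)
    then show ?thesis using timed_states by blast
  qed
  moreover have "(even i \<longrightarrow> (\<exists>d. timed_step G (h ! i) d (h ! Suc i))) \<and>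
        (odd i \<longrightarrow> (\<exists>t. disc_step G (h ! i) t (h ! Suc i)))" if "Suc i < length h" for i
    using hh[of "Suc (Suc i)"] that by auto
  ultimately show ?thesis using assms(2) by (auto simp: histories_def)
qed

lemma valid_prefix:
  assumes v: "valid_strategy G TT \<sigma>"
  and hp: "\<And>h. h \<in> histories G \<Longrightarrow> hd h = y \<Longrightarrow> x0 # x1 # h \<in> histories G"
  shows "valid_strategy G TT (\<lambda>h. if h \<noteq> [] \<and> hd h = y then \<sigma> (x0 # x1 # h) else Forever)"
  unfolding valid_strategy_def
proof (intro ballI)
  fix h assume h: "h \<in> histories G"
  show "(\<forall>d. (if h \<noteq> [] \<and> hd h = y then \<sigma> (x0 # x1 # h) else Forever) = Wait d \<longrightarrow> 0 \<le> d) \<and>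
         (\<forall>t. (if h \<noteq> [] \<and> hd h = y then \<sigma> (x0 # x1 # h) else Forever) = Take t \<longrightarrow>
              t \<in> TT \<and>
              (case t of
               (l, g, a, Y, l') \<Rightarrow>
                 fst (last h) = l \<and> gsat (snd (last h)) g \<and> gsat (vreset (snd (last h)) Y) (Inv G l'))) \<and>
         (\<forall>d s. (if h \<noteq> [] \<and> hd h = y then \<sigma> (x0 # x1 # h) else Forever) = Wait d \<longrightarrow>
                timed_step G (last h) d s \<longrightarrow>
                h @ [s] \<in> histories G \<longrightarrow>
                (\<exists>t. (if h @ [s] \<noteq> [] \<and> hd (h @ [s]) = y then \<sigma> (x0 # x1 # h @ [s]) else Forever) = Take t))"
  proof (cases "h \<noteq> [] \<and> hd h = y")
    case True
    then have abh: "x0 # x1 # h \<in> histories G" using hp h by blast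
    have ab: "\<And>s. h @ [s] \<in> histories G \<Longrightarrow> x0 # x1 # h @ [s] \<in> histories G"
      using hp True by (metis hd_append2)
    have l: "last (x0 # x1 # h) = last h" using True by simp
    have hd2: "\<And>s. hd (h @ [s]) = y" using True by simp
    have V: "(\<forall>d. \<sigma> (x0 # x1 # h) = Wait d \<longrightarrow> d \<ge> 0) \<and>
     (\<forall>t. \<sigma> (x0 # x1 # h) = Take t \<longrightarrow> t \<in> TT \<and>
        (case t of (l, g, a, Y, l') \<Rightarrow>
           fst (last (x0 # x1 # h)) = l \<and> gsat (snd (last (x0 # x1 # h))) g \<and> gsat (vreset (snd (last (x0 # x1 # h))) Y) (Inv G l'))) \<and>
     (\<forall>d s. \<sigma> (x0 # x1 # h) = Wait d \<longrightarrow> timed_step G (last (x0 # x1 # h)) d s \<longrightarrow> (x0 # x1 # h) @ [s] \<in> histories G \<longrightarrow>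
        (\<exists>t. \<sigma> ((x0 # x1 # h) @ [s]) = Take t))"
      using v abh unfolding valid_strategy_def by blast
    show ?thesis using True V ab l hd2 by simp
  next
    case False
    then show ?thesis by auto
  qed
qed

definition tcond where
  "tcond G s t \<longleftrightarrow> (case t of (l, g, a, Y, l') \<Rightarrow>
       fst s = l \<and> gsat (snd s) g \<and> gsat (vreset (snd s) Y) (Inv G l'))"

lemma disc_tcond: "disc_step G s t y \<Longrightarrow> tcond G s t"
  by (auto simp: disc_step_def tcond_def states_def split: prod.splits)

lemma tcond_disc:
  assumes "t \<in> Tr G" "s \<in> states G" "tcond G s t"
  shows "\<exists>y. disc_step G s t y"
proof -
  obtain l g a Y l' where t: "t = (l, g, a, Y, l')" by (cases t) auto
  have "is_val (vreset (snd s) Y)" using assms(2) by (auto simp: states_def is_val_def vreset_def)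
  then have "disc_step G s t (l', vreset (snd s) Y)" using assms t
    by (auto simp: disc_step_def tcond_def states_def)
  then show ?thesis by blast
qed

lemma valid_take: "valid_strategy G TT \<sigma> \<Longrightarrow> h \<in> histories G \<Longrightarrow> \<sigma> h = Take t \<Longrightarrow> t \<in> TT \<and> tcond G (last h) t"
  unfolding valid_strategy_def tcond_def by blast
lemma valid_wait: "valid_strategy G TT \<sigma> \<Longrightarrow> h \<in> histories G \<Longrightarrow> \<sigma> h = Wait d \<Longrightarrow> 0 \<le> d"
  unfolding valid_strategy_def by blast
lemma valid_wait2: "valid_strategy G TT \<sigma> \<Longrightarrow> h \<in> histories G \<Longrightarrow> \<sigma> h = Wait d \<Longrightarrow>
   timed_step G (last h) d z \<Longrightarrow> h @ [z] \<in> histories G \<Longrightarrow> \<exists>t. \<sigma> (h @ [z]) = Take t"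
  unfolding valid_strategy_def by blast

lemma valid_intro:
  assumes "\<And>h. h \<in> histories G \<Longrightarrow>
     (\<forall>d. \<sigma> h = Wait d \<longrightarrow> d \<ge> 0) \<and>
     (\<forall>t. \<sigma> h = Take t \<longrightarrow> t \<in> TT \<and> tcond G (last h) t) \<and>
     (\<forall>d s. \<sigma> h = Wait d \<longrightarrow> timed_step G (last h) d s \<longrightarrow> h @ [s] \<in> histories G \<longrightarrow>
        (\<exists>t. \<sigma> (h @ [s]) = Take t))"
  shows "valid_strategy G TT \<sigma>"
  using assms unfolding valid_strategy_def tcond_def by blast

lemma run_steps:
  assumes ir: "induced_run G \<sigma> s r n" and i: "enat (Suc i) < n"
  shows "(even i \<longrightarrow> (\<exists>d. timed_step G (r i) d (r (Suc i)))) \<and> (odd i \<longrightarrow> (\<exists>t. disc_step G (r i) t (r (Suc i))))"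
proof -
  have ok: "\<And>j. enat j < n \<Longrightarrow> step_ok G \<sigma> r n j" using ir by (simp add: induced_run_alt)
  have i': "enat i < n" using i by (meson Suc_ile_eq order.strict_implies_order)
  have ev: "\<exists>d. timed_step G (r j) d (r (Suc j))" if "even j" "enat (Suc j) < n" for j
  proof -
    have j: "enat j < n" using that(2) by (meson Suc_ile_eq order.strict_implies_order)
    show ?thesis
    proof (cases "\<sigma> (pref r j)")
      case (Wait d)
      then show ?thesis using ok[OF j] that by (auto simp: step_ok_def split: if_splits)
    next
      case Forever
      then show ?thesis using ok[OF j] that by (auto simp: step_ok_def)
    next
      case (Take t)
      then have "r (Suc j) = r j" "disc_step G (r (Suc j)) t (r (Suc (Suc j)))"
        using ok[OF j] that by (auto simp: step_ok_def)
      then show ?thesis using timed_0 disc_states by metis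
    qed
  qed
  have od: "\<exists>t. disc_step G (r i) t (r (Suc i))" if "odd i"
  proof (cases "\<exists>t. \<sigma> (pref r (i - 1)) = Take t")
    case True
    then obtain t where t: "\<sigma> (pref r (i - 1)) = Take t" by blast
    have "enat (i - 1) < n" using i' that by (cases i) (simp, metis Suc_ile_eq diff_Suc_1 order.strict_implies_order)
    moreover have "even (i - 1)" using that by simp
    ultimately have "disc_step G (r (Suc (i - 1))) t (r (Suc (Suc (i - 1))))"
      using ok t by (fastforce simp: step_ok_def)
    moreover have "Suc (i - 1) = i" using that by (cases i) auto
    ultimately show ?thesis by (auto simp del: split_paired_Ex)
  next
    case False
    then show ?thesis using ok[OF i'] that i by (auto simp: step_ok_def simp del: split_paired_Ex split_paired_All split: move.splits)
  qed
  show ?thesis using ev i od by blast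
qed

lemma trivial_R:
  assumes "s \<in> states G" "fst s \<in> R"
  shows "s \<in> W G R"
proof -
  have c: "ctrl_strategy G (\<lambda>h. Forever)" by (simp add: ctrl_strategy_def valid_strategy_def)
  have "winning_run G R r n" if ir: "induced_run G \<sigma> s r n" for \<sigma> r n
  proof -
    have r0: "r 0 = s" "0 < n" using ir by (auto simp: induced_run_def)
    have "s \<in> run_cover G r n"
    proof (cases "enat (Suc 0) < n")
      case True
      then obtain d where "timed_step G (r 0) d (r (Suc 0))" using run_steps[OF ir True] by auto
      moreover have "s \<in> cover_step G (r 0) d" using timed_0[OF assms(1)] r0 calculation
        by (auto simp: cover_step_def timed_states)
      ultimately show ?thesis unfolding run_cover_def
        apply (intro UnI1)
        apply (rule UN_I[of 0])
         apply (simp add: True)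
        apply (rule UN_I[of d])
        by auto
    next
      case False
      then have "n = enat (Suc 0)" using r0
        by (cases n) (auto simp: zero_enat_def)
      moreover have "s \<in> cover_state G (r 0)" using timed_0[OF assms(1)] r0 by (auto simp: cover_state_def)
      ultimately show ?thesis unfolding run_cover_def by (intro UnI2 UN_I[of 0]) auto
    qed
    then show ?thesis using assms by (auto simp: winning_run_def)
  qed
  then show ?thesis using assms c by (auto simp: W_def winning_strategy_def)
qed

definition envc where
  "envc m0 m1 s x e h = (if h = [s] then m0 else if h = [s, x] then m1
     else if 2 < length h \<and> take 2 h = [s, x] then e (drop 2 h) else Forever)"

lemma envc_app: "h \<noteq> [] \<Longrightarrow> envc m0 m1 s x e (s # x # h) = e h"
  by (cases h) (auto simp: envc_def)

lemma envc_valid: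
  assumes v: "valid_strategy G TT e"
  and h0: "\<forall>d. m0 = Wait d \<longrightarrow> 0 \<le> d \<and> (\<forall>z. timed_step G s d z \<longrightarrow> z = x) \<and> (\<exists>t. m1 = Take t)"
  and h0': "\<forall>t. m0 = Take t \<longrightarrow> t \<in> TT \<and> tcond G s t"
  and h1: "\<forall>d. m1 \<noteq> Wait d" and h1': "\<forall>t. m1 = Take t \<longrightarrow> t \<in> TT \<and> tcond G x t"
  shows "valid_strategy G TT (envc m0 m1 s x e)"
proof (rule valid_intro)
  fix h assume h: "h \<in> histories G"
  show "(\<forall>d. envc m0 m1 s x e h = Wait d \<longrightarrow> d \<ge> 0) \<and>
     (\<forall>t. envc m0 m1 s x e h = Take t \<longrightarrow> t \<in> TT \<and> tcond G (last h) t) \<and>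
     (\<forall>d z. envc m0 m1 s x e h = Wait d \<longrightarrow> timed_step G (last h) d z \<longrightarrow> h @ [z] \<in> histories G \<longrightarrow>
        (\<exists>t. envc m0 m1 s x e (h @ [z]) = Take t))"
  proof (cases "h = [s]")
    case True
    then show ?thesis using h0 h0' by (auto simp: envc_def)
  next
    case F1: False
    show ?thesis
    proof (cases "h = [s, x]")
      case True
      then show ?thesis using h1 h1' F1 by (auto simp: envc_def)
    next
      case F2: False
      show ?thesis
      proof (cases "2 < length h \<and> take 2 h = [s, x]")
        case True
        then obtain rest where hr: "h = s # x # rest" "rest \<noteq> []"
          by (cases h; cases "tl h") (auto)
        have rh: "rest \<in> histories G" using hist_drop2 h hr by blast
        have e1: "envc m0 m1 s x e h = e rest" using hr envc_app by metis
        have e2: "envc m0 m1 s x e (h @ [z]) = e (rest @ [z])" for z using hr envc_app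
          by (metis append_Cons append_is_Nil_conv)
        have h2: "h @ [z] \<in> histories G \<Longrightarrow> rest @ [z] \<in> histories G" for z
          using hist_drop2[of s x "rest @ [z]"] hr by simp
        have l: "last h = last rest" using hr by simp
        show ?thesis unfolding e1 e2 l using valid_take[OF v rh] valid_wait[OF v rh] valid_wait2[OF v rh] h2
          by blast
      next
        case False
        then show ?thesis using F1 F2 by (auto simp: envc_def)
      qed
    qed
  qed
qed

lemma ext_W:
  assumes win: "winning_strategy G R \<sigma> s'" and nR: "fst s' \<notin> R"
  and hx: "timed_step G s' \<delta> x" and hy: "disc_step G x t y"
  and Ev: "\<And>e. env_strategy G e \<Longrightarrow> env_strategy G (E e)"
  and Ea: "\<And>e h. h \<noteq> [] \<Longrightarrow> hd h = y \<Longrightarrow> E e (s' # x # h) = e h"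
  and FS: "\<And>e. (global_strategy \<sigma> (E e) [s'] = Take t \<and> x = s') \<or>
      (global_strategy \<sigma> (E e) [s'] = Wait \<delta> \<and> global_strategy \<sigma> (E e) [s', x] = Take t)"
  shows "y \<in> W G R"
proof -
  define \<sigma>'' where "\<sigma>'' = (\<lambda>h. if h \<noteq> [] \<and> hd h = y then \<sigma> (s' # x # h) else Forever)"
  have c: "ctrl_strategy G \<sigma>" using win by (simp add: winning_strategy_def)
  have c'': "ctrl_strategy G \<sigma>''" unfolding \<sigma>''_def using c unfolding ctrl_strategy_def
    by (rule valid_prefix) (use hist_cons2[OF hx hy] in blast)
  have ys: "y \<in> states G" using hy disc_states by blast
  have "winning_run G R r n" if e: "env_strategy G e" and ir: "induced_run G (global_strategy \<sigma>'' e) y r n" for e r n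
  proof -
    have n0: "0 < n" using ir by (simp add: induced_run_def)
    have app: "global_strategy \<sigma> (E e) (s' # x # h) = global_strategy \<sigma>'' e h" if "h \<noteq> []" "hd h = y" for h
      unfolding global_strategy_def \<sigma>''_def Ea[of h e, OF that] using that by simp
    have fs: "(global_strategy \<sigma> (E e) [s'] = Take t \<and> x = s' \<and> disc_step G x t y) \<or>
           (global_strategy \<sigma> (E e) [s'] = Wait \<delta> \<and> timed_step G s' \<delta> x \<and> global_strategy \<sigma> (E e) [s', x] = Take t \<and> disc_step G x t y)"
      using FS[of e] hx hy by blast
    let ?r = "\<lambda>k. if k = 0 then s' else if k = Suc 0 then x else r (k - 2)"
    have ir2: "induced_run G (global_strategy \<sigma> (E e)) s' ?r (n+2)"
      by (rule unshift_run[OF ir app fs])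
    have "winning_run G R ?r (n+2)" using win Ev[OF e] ir2 by (auto simp: winning_strategy_def)
    then obtain z where z: "z \<in> run_cover G ?r (n+2)" "fst z \<in> R" by (auto simp: winning_run_def)
    have sh: "(\<lambda>k. ?r (Suc (Suc k))) = r" by auto
    from cover_unshift[OF n0, of G ?r] z nR have "z \<in> run_cover G r n" unfolding sh by auto
    then show ?thesis using z by (auto simp: winning_run_def)
  qed
  then show ?thesis using ys c'' by (auto simp: W_def winning_strategy_def)
qed

lemma enat_split2: "enat (Suc (Suc 0)) < n \<Longrightarrow> \<exists>n'. n = n' + 2 \<and> 0 < n'"
proof (cases n)
  case (enat m)
  assume "enat (Suc (Suc 0)) < n"
  with enat have "m > 2" by simp
  then show ?thesis using enat by (intro exI[of _ "enat (m - 2)"]) (auto simp: numeral_eq_enat zero_enat_def)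
next
  case infinity
  then show ?thesis by (intro exI[of _ \<infinity>]) auto
qed

lemma Wsome: "y \<in> W G R \<Longrightarrow> winning_strategy G R (SOME \<sigma>. winning_strategy G R \<sigma> y) y"
  unfolding W_def by (metis (mono_tags, lifting) mem_Collect_eq someI)

lemma caseA:
  assumes ss: "s \<in> states G" and hd: "timed_step G s d s'" and ht: "disc_step G s' t s3"
  and tc: "t \<in> Tc G" and w3: "s3 \<in> W G R"
  and cov: "cover_step G s d \<inter> Uncontrollable G (W G R) = {}"
  shows "s \<in> W G R"
proof -
  define \<sigma>W where "\<sigma>W y = (SOME \<sigma>. winning_strategy G R \<sigma> y)" for y
  have \<sigma>W: "y \<in> W G R \<Longrightarrow> winning_strategy G R (\<sigma>W y) y" for y unfolding \<sigma>W_def by (rule Wsome)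
  define \<sigma>c where "\<sigma>c h = (if h = [s] then Wait d else if h = [s, s'] then Take t
      else if 2 < length h \<and> hd h = s \<and> h ! 2 \<in> W G R then \<sigma>W (h ! 2) (drop 2 h) else Forever)" for h
  have d0: "0 \<le> d" using hd timed_states by blast
  have ctrl: "ctrl_strategy G \<sigma>c" unfolding ctrl_strategy_def
  proof (rule valid_intro)
    fix h assume h: "h \<in> histories G"
    show "(\<forall>da. \<sigma>c h = Wait da \<longrightarrow> da \<ge> 0) \<and>
     (\<forall>ta. \<sigma>c h = Take ta \<longrightarrow> ta \<in> Tc G \<and> tcond G (last h) ta) \<and>
     (\<forall>da z. \<sigma>c h = Wait da \<longrightarrow> timed_step G (last h) da z \<longrightarrow> h @ [z] \<in> histories G \<longrightarrow>
        (\<exists>ta. \<sigma>c (h @ [z]) = Take ta))"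
    proof (cases "h = [s]")
      case True
      have "\<sigma>c [s, z] = Take t" if "timed_step G s d z" for z
        using timed_det[OF hd that] by (simp add: \<sigma>c_def)
      then show ?thesis using True d0 by (auto simp: \<sigma>c_def simp del: split_paired_Ex split_paired_All)
    next
      case F1: False
      show ?thesis
      proof (cases "h = [s, s']")
        case True
        then show ?thesis using F1 tc disc_tcond[OF ht] by (auto simp: \<sigma>c_def)
      next
        case F2: False
        show ?thesis
        proof (cases "2 < length h \<and> hd h = s \<and> h ! 2 \<in> W G R")
          case True
          then obtain b rest where hr: "h = s # b # rest" "rest \<noteq> []"
            by (cases h; cases "tl h") (auto)
          have rh: "rest \<in> histories G" using hist_drop2 h hr by blast
          let ?y = "hd rest"
          have yW: "?y \<in> W G R" using True hr by (cases rest) auto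
          have v: "valid_strategy G (Tc G) (\<sigma>W ?y)" using \<sigma>W[OF yW]
            by (simp add: winning_strategy_def ctrl_strategy_def)
          have e1: "\<sigma>c h = \<sigma>W ?y rest" using hr yW by (cases rest) (auto simp: \<sigma>c_def)
          have e2: "\<sigma>c (h @ [z]) = \<sigma>W ?y (rest @ [z])" for z using hr yW
            by (cases rest) (auto simp: \<sigma>c_def)
          have h2: "h @ [z] \<in> histories G \<Longrightarrow> rest @ [z] \<in> histories G" for z
            using hist_drop2[of s b "rest @ [z]"] hr by simp
          have l: "last h = last rest" using hr by simp
          show ?thesis unfolding e1 e2 l using valid_take[OF v rh] valid_wait[OF v rh] valid_wait2[OF v rh] h2
            by blast
        next
          case False
          then show ?thesis using F1 F2 by (auto simp: \<sigma>c_def)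
        qed
      qed
    qed
  qed
  have unc: "z \<in> cover_step G s d \<Longrightarrow> tu \<in> Tu G \<Longrightarrow> disc_step G z tu y \<Longrightarrow> y \<in> W G R" for z tu y
    using cov disc_states unfolding Uncontrollable_def by blast
  have "winning_run G R r n" if e: "env_strategy G e" and ir: "induced_run G (global_strategy \<sigma>c e) s r n" for e r n
  proof -
    let ?S = "global_strategy \<sigma>c e"
    have r0: "r 0 = s" and n0: "0 < n" using ir by (auto simp: induced_run_def)
    have ok: "\<And>j. enat j < n \<Longrightarrow> step_ok G ?S r n j" using ir by (simp add: induced_run_alt)
    have ev: "valid_strategy G (Tu G) e" using e by (simp add: env_strategy_def)
    have suf: "winning_run G R r n" if n2: "enat (Suc (Suc 0)) < n" and w: "r (Suc (Suc 0)) \<in> W G R"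
    proof -
      obtain n' where nn: "n = n' + 2" "0 < n'" using enat_split2[OF n2] by blast
      have "enat (Suc 0) < n" using n2 by (metis Suc_ile_eq less_imp_le)
      then obtain d1 where t1: "timed_step G (r 0) d1 (r (Suc 0))" using run_steps[OF ir] by fastforce
      obtain t2 where t2: "disc_step G (r (Suc 0)) t2 (r (Suc (Suc 0)))" using run_steps[OF ir n2] by auto
      define e' where "e' = (\<lambda>h. if h \<noteq> [] \<and> hd h = r (Suc (Suc 0)) then e (r 0 # r (Suc 0) # h) else Forever)"
      have ev': "env_strategy G e'" unfolding env_strategy_def e'_def using ev
        by (rule valid_prefix) (use hist_cons2[OF t1 t2] in blast)
      have app: "?S (r 0 # r (Suc 0) # h) = global_strategy (\<sigma>W (r (Suc (Suc 0)))) e' h"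
        if "h \<noteq> []" "hd h = r (Suc (Suc 0))" for h
      proof -
        have a: "\<sigma>c (r 0 # r (Suc 0) # h) = \<sigma>W (r (Suc (Suc 0))) h"
          using that r0 w by (cases h) (auto simp: \<sigma>c_def)
        have b: "e (r 0 # r (Suc 0) # h) = e' h" using that by (simp add: e'_def)
        show ?thesis unfolding global_strategy_def a b by simp
      qed
      have ir': "induced_run G (global_strategy (\<sigma>W (r (Suc (Suc 0)))) e') (r (Suc (Suc 0))) (\<lambda>k. r (Suc (Suc k))) n'"
        using shift_run[of G ?S s r n' _] ir nn app by blast
      have "winning_run G R (\<lambda>k. r (Suc (Suc k))) n'" using \<sigma>W[OF w] ev' ir'
        by (auto simp: winning_strategy_def)
      then show ?thesis using cover_shift_sub[of G r n'] nn by (auto simp: winning_run_def)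
    qed
    have h1: "[s] \<in> histories G" using ss by (rule hist_single)
    have sc: "s \<in> cover_step G s d" using timed_0[OF ss] d0 by (auto simp: cover_step_def)
    show ?thesis
    proof (cases "\<exists>tu. e [s] = Take tu")
      case True
      then obtain tu where tu: "e [s] = Take tu" by blast
      have "?S [s] = Take tu" using tu by (simp add: global_strategy_def)
      then have "enat (Suc (Suc 0)) < n" "r (Suc 0) = s" "disc_step G s tu (r (Suc (Suc 0)))"
        using ok[OF n0[unfolded zero_enat_def]] r0 by (auto simp: step_ok_def)
      moreover have "tu \<in> Tu G" using valid_take[OF ev h1 tu] by blast
      ultimately show ?thesis using suf unc[OF sc] by blast
    next
      case NT: False
      obtain \<delta> where S0: "?S [s] = Wait \<delta>" and dl: "0 \<le> \<delta>" "\<delta> \<le> d" and dn: "\<delta> \<noteq> d \<Longrightarrow> e [s] = Wait \<delta>"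
      proof (cases "e [s]")
        case (Wait de)
        have "0 \<le> de" using valid_wait[OF ev h1 Wait] .
        then show ?thesis using that[of "min d de"] Wait d0 by (auto simp: global_strategy_def \<sigma>c_def)
      next
        case Forever
        then show ?thesis using that[of d] d0 by (auto simp: global_strategy_def \<sigma>c_def)
      next
        case (Take tu) then show ?thesis using NT by blast
      qed
      have ex: "\<exists>z. timed_step G s \<delta> z" using timed_convex[OF hd dl] by blast
      then have n1: "enat (Suc 0) < n" and t1: "timed_step G s \<delta> (r (Suc 0))"
        using ok[OF n0[unfolded zero_enat_def]] S0 r0 by (auto simp: step_ok_def simp del: split_paired_Ex)
      have r1c: "r (Suc 0) \<in> cover_step G s d" using t1 dl by (auto simp: cover_step_def)
      have ok1: "step_ok G ?S r n (Suc 0)" using ok[OF n1] .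
      have h2: "[s, r (Suc 0)] \<in> histories G" using hist_two[OF t1] .
      have step1: "\<And>t'. ?S [s, r (Suc 0)] = Take t' \<Longrightarrow> enat (Suc (Suc 0)) < n \<and> disc_step G (r (Suc 0)) t' (r (Suc (Suc 0)))"
        using ok1 S0 r0 by (auto simp: step_ok_def pref_1)
      show ?thesis
      proof (cases "\<exists>tu. e [s, r (Suc 0)] = Take tu")
        case True
        then obtain tu where tu: "e [s, r (Suc 0)] = Take tu" by blast
        have "?S [s, r (Suc 0)] = Take tu" using tu by (simp add: global_strategy_def)
        moreover have "tu \<in> Tu G" using valid_take[OF ev h2 tu] by blast
        ultimately show ?thesis using step1 suf unc[OF r1c] by blast
      next
        case NT2: False
        show ?thesis
        proof (cases "r (Suc 0) = s'")
          case True
          have "\<sigma>c [s, s'] = Take t" by (simp add: \<sigma>c_def)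
          then have "?S [s, r (Suc 0)] = Take t" using NT2 True
            by (cases "e [s, s']") (auto simp: global_strategy_def)
          then have "enat (Suc (Suc 0)) < n" "disc_step G s' t (r (Suc (Suc 0)))" using step1 True by auto
          moreover have "r (Suc (Suc 0)) = s3" using disc_det[OF ht] calculation(2) by metis
          ultimately show ?thesis using suf w3 by blast
        next
          case False
          then have "\<delta> \<noteq> d" using timed_det[OF hd] t1 by blast
          then have "e [s] = Wait \<delta>" by (rule dn)
          then have "\<exists>tu. e ([s] @ [r (Suc 0)]) = Take tu"
            using valid_wait2[OF ev h1 _ _ ] t1 h2 by simp
          then show ?thesis using NT2 by simp
        qed
      qed
    qed
  qed
  then show ?thesis using ss ctrl by (auto simp: W_def winning_strategy_def)
qed

lemma no_run_win:
  assumes win: "winning_strategy G R \<sigma> s'" and nR: "fst s' \<notin> R"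
  and h: "\<sigma> [s'] = Forever \<or> (\<sigma> [s'] = Wait d \<and> \<not> (\<exists>z. timed_step G s' d z))"
  shows False
proof -
  have ev: "env_strategy G (\<lambda>h. Forever)" by (simp add: env_strategy_def valid_strategy_def)
  have "induced_run G (global_strategy \<sigma> (\<lambda>h. Forever)) s' (\<lambda>_. s') (enat (Suc 0))"
    using h unfolding induced_run_def by (auto simp: global_strategy_def zero_enat_def)
  then have "winning_run G R (\<lambda>_. s') (enat (Suc 0))" using win ev by (auto simp: winning_strategy_def)
  then obtain z where z: "z \<in> run_cover G (\<lambda>_. s') (enat (Suc 0))" "fst z \<in> R" by (auto simp: winning_run_def)
  then have "z \<in> cover_state G s'" by (auto simp: run_cover_def)
  then show False using z nR cover_state_fst by metis
qed

lemma caseB: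
  assumes w: "s' \<in> W G R" and nR: "fst s' \<notin> R"
  shows "\<exists>d2 s''. timed_step G s' d2 s'' \<and> s'' \<in> WinningMoves G (W G R) \<and>
           cover_step G s' d2 \<inter> Uncontrollable G (W G R) = {}"
proof -
  obtain \<sigma> where win: "winning_strategy G R \<sigma> s'" and ss: "s' \<in> states G" using w by (auto simp: W_def)
  have c: "valid_strategy G (Tc G) \<sigma>" using win by (simp add: winning_strategy_def ctrl_strategy_def)
  have h1: "[s'] \<in> histories G" using ss by (rule hist_single)
  have envF: "env_strategy G e \<Longrightarrow> env_strategy G (envc Forever Forever s' x e)" for e x
    unfolding env_strategy_def by (rule envc_valid) auto
  have Ea: "\<And>e h. h \<noteq> [] \<Longrightarrow> hd h = y \<Longrightarrow> envc m0 m1 s' x e (s' # x # h) = e h" for m0 m1 x y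
    by (rule envc_app)
  show ?thesis
  proof (cases "\<sigma> [s']")
    case (Take t)
    have tt: "t \<in> Tc G" "tcond G s' t" using valid_take[OF c h1 Take] by auto
    then obtain s3 where s3: "disc_step G s' t s3" using tcond_disc[of t G s'] ss by (auto simp: Tr_def)
    have t0: "timed_step G s' 0 s'" using timed_0[OF ss] .
    have "s3 \<in> W G R"
    proof (rule ext_W[OF win nR t0 s3, where E="envc Forever Forever s' s'"])
      show "env_strategy G (envc Forever Forever s' s' e)" if "env_strategy G e" for e using envF[OF that] .
      show "envc Forever Forever s' s' e (s' # s' # h) = e h" if "h \<noteq> []" for e h using envc_app[OF that] .
      show "global_strategy \<sigma> (envc Forever Forever s' s' e) [s'] = Take t \<and> s' = s' \<or>
        global_strategy \<sigma> (envc Forever Forever s' s' e) [s'] = Wait 0 \<and>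
        global_strategy \<sigma> (envc Forever Forever s' s' e) [s', s'] = Take t" for e
      proof -
        have "envc Forever Forever s' s' e [s'] = Forever" by (simp add: envc_def)
        then have "global_strategy \<sigma> (envc Forever Forever s' s' e) [s'] = Take t"
          unfolding global_strategy_def Take by simp
        then show ?thesis by blast
      qed
    qed
    then have wm: "s' \<in> WinningMoves G (W G R)" using ss tt s3 by (auto simp: WinningMoves_def)
    have "y \<in> W G R" if "tu \<in> Tu G" "disc_step G s' tu y" for tu y
    proof (rule ext_W[OF win nR t0 that(2), where E="envc (Take tu) Forever s' s'"])
      have tcu: "tcond G s' tu" using disc_tcond[OF \<open>disc_step G s' tu y\<close>] .
      show "env_strategy G (envc (Take tu) Forever s' s' e)" if "env_strategy G e" for e
        using that unfolding env_strategy_def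
        by (rule envc_valid) (use \<open>tu \<in> Tu G\<close> tcu in simp_all)
      show "envc (Take tu) Forever s' s' e (s' # s' # h) = e h" if "h \<noteq> []" for e h using envc_app[OF that] .
      show "global_strategy \<sigma> (envc (Take tu) Forever s' s' e) [s'] = Take tu \<and> s' = s' \<or>
        global_strategy \<sigma> (envc (Take tu) Forever s' s' e) [s'] = Wait 0 \<and>
        global_strategy \<sigma> (envc (Take tu) Forever s' s' e) [s', s'] = Take tu" for e
      proof -
        have "envc (Take tu) Forever s' s' e [s'] = Take tu" by (simp add: envc_def)
        then have "global_strategy \<sigma> (envc (Take tu) Forever s' s' e) [s'] = Take tu"
          unfolding global_strategy_def by simp
        then show ?thesis by blast
      qed
    qed
    moreover have "cover_step G s' 0 = {s'}"
    proof
      show "cover_step G s' 0 \<subseteq> {s'}"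
      proof
        fix z assume "z \<in> cover_step G s' 0"
        then obtain d' where "0 \<le> d'" "d' \<le> 0" "timed_step G s' d' z" by (auto simp: cover_step_def)
        then have "timed_step G s' 0 z" by simp
        then show "z \<in> {s'}" using timed_det[OF t0] by blast
      qed
      show "{s'} \<subseteq> cover_step G s' 0" using t0 by (auto simp: cover_step_def)
    qed
    ultimately have "cover_step G s' 0 \<inter> Uncontrollable G (W G R) = {}"
      by (auto simp: Uncontrollable_def)
    then show ?thesis using t0 wm by blast
  next
    case Forever
    then show ?thesis using no_run_win[OF win nR] by blast
  next
    case (Wait d2)
    have d20: "0 \<le> d2" using valid_wait[OF c h1 Wait] .
    have "\<exists>z. timed_step G s' d2 z"
    proof (rule ccontr)
      assume "\<not> (\<exists>z. timed_step G s' d2 z)"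
      then show False using no_run_win[OF win nR, of d2] Wait by simp
    qed
    then obtain s'' where t2: "timed_step G s' d2 s''" by blast
    have h2: "[s', s''] \<in> histories G" using hist_two[OF t2] .
    have "\<exists>tc. \<sigma> ([s'] @ [s'']) = Take tc" using valid_wait2[OF c h1 Wait, of s''] t2 h2 by simp
    then obtain tc where tc: "\<sigma> [s', s''] = Take tc" by auto
    have tt: "tc \<in> Tc G" "tcond G s'' tc" using valid_take[OF c h2 tc] by auto
    have s''s: "s'' \<in> states G" using t2 timed_states by blast
    obtain s3 where s3: "disc_step G s'' tc s3" using tcond_disc[of tc G s'', OF _ s''s] tt
      by (auto simp: Tr_def)
    have "s3 \<in> W G R"
    proof (rule ext_W[OF win nR t2 s3, where E="envc Forever Forever s' s''"])
      show "env_strategy G (envc Forever Forever s' s'' e)" if "env_strategy G e" for e using envF[OF that] .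
      show "envc Forever Forever s' s'' e (s' # s'' # h) = e h" if "h \<noteq> []" for e h using envc_app[OF that] .
      show "global_strategy \<sigma> (envc Forever Forever s' s'' e) [s'] = Take tc \<and> s'' = s' \<or>
        global_strategy \<sigma> (envc Forever Forever s' s'' e) [s'] = Wait d2 \<and>
        global_strategy \<sigma> (envc Forever Forever s' s'' e) [s', s''] = Take tc" for e
      proof -
        have a: "envc Forever Forever s' s'' e [s'] = Forever" by (simp add: envc_def)
        have b: "envc Forever Forever s' s'' e [s', s''] = Forever" by (simp add: envc_def)
        have "global_strategy \<sigma> (envc Forever Forever s' s'' e) [s'] = Wait d2"
          unfolding global_strategy_def a Wait by simp
        moreover have "global_strategy \<sigma> (envc Forever Forever s' s'' e) [s', s''] = Take tc"
          unfolding global_strategy_def b tc by simp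
        ultimately show ?thesis by blast
      qed
    qed
    then have wm: "s'' \<in> WinningMoves G (W G R)" using s''s tt s3
      unfolding WinningMoves_def by blast
    have "y \<in> W G R" if z: "z \<in> cover_step G s' d2" and tu: "tu \<in> Tu G" "disc_step G z tu y" for z tu y
    proof -
      obtain \<delta> where tz: "timed_step G s' \<delta> z" "0 \<le> \<delta>" "\<delta> \<le> d2" using z by (auto simp: cover_step_def)
      show ?thesis
      proof (rule ext_W[OF win nR tz(1) tu(2), where E="envc (Wait \<delta>) (Take tu) s' z"])
        have tcu: "tcond G z tu" using disc_tcond[OF tu(2)] .
        have det: "\<forall>z'. timed_step G s' \<delta> z' \<longrightarrow> z' = z" using timed_det[OF tz(1)] by blast
        show "env_strategy G (envc (Wait \<delta>) (Take tu) s' z e)" if "env_strategy G e" for e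
          using that unfolding env_strategy_def
          by (rule envc_valid) (use tu(1) tcu tz(2) det in \<open>simp_all del: split_paired_Ex split_paired_All\<close>)
        show "envc (Wait \<delta>) (Take tu) s' z e (s' # z # h) = e h" if "h \<noteq> []" for e h using envc_app[OF that] .
        show "global_strategy \<sigma> (envc (Wait \<delta>) (Take tu) s' z e) [s'] = Take tu \<and> z = s' \<or>
          global_strategy \<sigma> (envc (Wait \<delta>) (Take tu) s' z e) [s'] = Wait \<delta> \<and>
          global_strategy \<sigma> (envc (Wait \<delta>) (Take tu) s' z e) [s', z] = Take tu" for e
        proof -
          have a: "envc (Wait \<delta>) (Take tu) s' z e [s'] = Wait \<delta>" by (simp add: envc_def)
          have b: "envc (Wait \<delta>) (Take tu) s' z e [s', z] = Take tu" by (simp add: envc_def)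
          have "global_strategy \<sigma> (envc (Wait \<delta>) (Take tu) s' z e) [s'] = Wait \<delta>"
            unfolding global_strategy_def a Wait using tz(3) by (simp add: min_def)
          moreover have "global_strategy \<sigma> (envc (Wait \<delta>) (Take tu) s' z e) [s', z] = Take tu"
            unfolding global_strategy_def b by simp
          ultimately show ?thesis by blast
        qed
      qed
    qed
    then have "cover_step G s' d2 \<inter> Uncontrollable G (W G R) = {}"
      unfolding Uncontrollable_def by blast
    then show ?thesis using t2 wm by blast
  qed
qed

theorem lemmaA1:
  fixes G :: "('l::finite, 'x::finite, 'p::finite, 'a) ptg"
    and R :: "'l set"
  assumes "ptg_wf G"
  shows "SafePred G (W G R \<union> WinningMoves G (W G R)) (Uncontrollable G (W G R)) \<subseteq> W G R"
proof
  fix s assume "s \<in> SafePred G (W G R \<union> WinningMoves G (W G R)) (Uncontrollable G (W G R))"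
  then obtain s' d where ss: "s \<in> states G" and s': "s' \<in> W G R \<union> WinningMoves G (W G R)"
    and td: "timed_step G s d s'" and cov: "cover_step G s d \<inter> Uncontrollable G (W G R) = {}"
    by (auto simp: SafePred_def)
  show "s \<in> W G R"
  proof (cases "fst s \<in> R")
    case True then show ?thesis using trivial_R ss by blast
  next
    case nR: False
    have wmA: "s \<in> W G R" if a1: "timed_step G s e s''" and a2: "s'' \<in> WinningMoves G (W G R)"
       and a3: "cover_step G s e \<inter> Uncontrollable G (W G R) = {}" for e s''
    proof -
      obtain t s3 where "t \<in> Tc G" "s3 \<in> W G R" "disc_step G s'' t s3"
        using a2 by (auto simp: WinningMoves_def)
      then show ?thesis using caseA[OF ss a1] a3 by blast
    qed
    show ?thesis
    proof (cases "s' \<in> WinningMoves G (W G R)")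
      case True then show ?thesis using wmA td cov by blast
    next
      case False
      with s' have w: "s' \<in> W G R" by blast
      have "fst s' \<notin> R" using nR td timed_states by metis
      then obtain d2 s'' where t2: "timed_step G s' d2 s''" and wm: "s'' \<in> WinningMoves G (W G R)"
        and cov2: "cover_step G s' d2 \<inter> Uncontrollable G (W G R) = {}"
        using caseB[OF w] by blast
      have tt: "timed_step G s (d + d2) s''" using timed_trans[OF td t2] .
      have "cover_step G s (d + d2) \<subseteq> cover_step G s d \<union> cover_step G s' d2"
      proof
        fix z assume "z \<in> cover_step G s (d + d2)"
        then obtain e where e: "0 \<le> e" "e \<le> d + d2" "timed_step G s e z" by (auto simp: cover_step_def)
        show "z \<in> cover_step G s d \<union> cover_step G s' d2"
        proof (cases "e \<le> d")
          case True then show ?thesis using e by (auto simp: cover_step_def)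
        next
          case False
          then have "timed_step G s' (e - d) z" using timed_split[OF td e(3)] by simp
          then show ?thesis using e False by (auto simp: cover_step_def)
        qed
      qed
      then have "cover_step G s (d + d2) \<inter> Uncontrollable G (W G R) = {}" using cov cov2 by blast
      then show ?thesis using wmA tt wm by blast
    qed
  qed
qed

end
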